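(* Let $X$ be a locally finite poset, $R$ a commutative unital ring and $\alpha_1,\dots,\alpha_n$ pairwise commuting idempotents of $I(X,R)$. Then there exists an invertible $\beta\in I(X,R)$ such that $\alpha_i=\beta(\alpha_i)_D\beta^{-1}$ for all $1\le i\le n$.
   Context: $I(X,R)$ is the incidence algebra of the locally finite poset $X$ over $R$: functions $f:X\times X\to R$ with $f(x,y)=0$ unless $x\le y$, with product $(fg)(x,y)=\sum_{x\le z\le y}f(x,z)g(z,y)$. For $f\in I(X,R)$, its diagonal $f_D$ is defined by $f_D(x,x)=f(x,x)$ and $f_D(x,y)=0$ for $x\ne y$. *)

theory Defs
  imports Main
begin

definition locally_finite_poset :: "'a::order itself \<Rightarrow> bool" where
  "locally_finite_poset _ \<longleftrightarrow> (\<forall>x y::'a. finite {x..y})"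

definition incidence_algebra :: "('a::order \<Rightarrow> 'a \<Rightarrow> 'r::zero) set" where
  "incidence_algebra = {f. \<forall>x y. \<not> x \<le> y \<longrightarrow> f x y = 0}"

definition inc_mult :: "('a::order \<Rightarrow> 'a \<Rightarrow> 'r::comm_ring_1) \<Rightarrow> ('a \<Rightarrow> 'a \<Rightarrow> 'r) \<Rightarrow> ('a \<Rightarrow> 'a \<Rightarrow> 'r)" where
  "inc_mult f g = (\<lambda>x y. \<Sum>z\<in>{x..y}. f x z * g z y)"

definition inc_one :: "'a::order \<Rightarrow> 'a \<Rightarrow> 'r::comm_ring_1" where
  "inc_one = (\<lambda>x y. if x = y then 1 else 0)"

definition inc_diag :: "('a::order \<Rightarrow> 'a \<Rightarrow> 'r::zero) \<Rightarrow> ('a \<Rightarrow> 'a \<Rightarrow> 'r)" where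
  "inc_diag f = (\<lambda>x y. if x = y then f x x else 0)"

end

theory Submission
  imports Defs "HOL-Algebra.Ring"
begin


lemma lf_fin: "locally_finite_poset TYPE('a::order) \<Longrightarrow> finite {x..y::'a}"
  by (simp add: locally_finite_poset_def)

lemma inc_mult_in: "inc_mult f g \<in> incidence_algebra"
  unfolding incidence_algebra_def inc_mult_def by auto

lemma inc_one_in: "inc_one \<in> incidence_algebra"
  unfolding incidence_algebra_def inc_one_def by auto

lemma inc_assoc:
  fixes f g h :: "'a::order \<Rightarrow> 'a \<Rightarrow> 'r::comm_ring_1"
  assumes lf: "locally_finite_poset TYPE('a)"
  shows "inc_mult (inc_mult f g) h = inc_mult f (inc_mult g h)"
proof (rule ext)+
  fix x y :: 'a
  have fin: "\<And>a b::'a. finite {a..b}" using lf_fin[OF lf] .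
  have e1: "\<And>z. z\<in>{x..y} \<Longrightarrow> {x..z} = {w. w\<in>{x..y} \<and> w\<le>z}" by (auto intro: order_trans)
  have e2: "\<And>w. w\<in>{x..y} \<Longrightarrow> {w..y} = {z. z\<in>{x..y} \<and> w\<le>z}" by (auto intro: order_trans)
  have "inc_mult (inc_mult f g) h x y = (\<Sum>z\<in>{x..y}. \<Sum>w\<in>{x..z}. f x w * g w z * h z y)"
    by (simp add: inc_mult_def sum_distrib_right)
  also have "\<dots> = (\<Sum>z\<in>{x..y}. \<Sum>w\<in>{w. w\<in>{x..y} \<and> w\<le>z}. f x w * g w z * h z y)"
    by (rule sum.cong[OF refl]) (simp add: e1)
  also have "\<dots> = (\<Sum>w\<in>{x..y}. \<Sum>z\<in>{z. z\<in>{x..y} \<and> w\<le>z}. f x w * g w z * h z y)"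
    by (rule sum.swap_restrict[OF fin fin])
  also have "\<dots> = (\<Sum>w\<in>{x..y}. \<Sum>z\<in>{w..y}. f x w * g w z * h z y)"
    by (rule sum.cong[OF refl]) (simp add: e2)
  also have "\<dots> = inc_mult f (inc_mult g h) x y"
    by (simp add: inc_mult_def sum_distrib_left mult.assoc)
  finally show "inc_mult (inc_mult f g) h x y = inc_mult f (inc_mult g h) x y" .
qed

lemma inc_one_left:
  assumes lf: "locally_finite_poset TYPE('a::order)" and f: "f \<in> incidence_algebra"
  shows "inc_mult inc_one f = (f :: 'a \<Rightarrow> 'a \<Rightarrow> 'r::comm_ring_1)"
proof (rule ext)+
  fix x y :: 'a
  have "inc_mult inc_one f x y = (\<Sum>z\<in>{x..y}. if z = x then f z y else 0)"
    unfolding inc_mult_def inc_one_def by (rule sum.cong) auto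
  also have "\<dots> = f x y" using f lf_fin[OF lf] unfolding incidence_algebra_def by simp
  finally show "inc_mult inc_one f x y = f x y" .
qed

lemma inc_one_right:
  assumes lf: "locally_finite_poset TYPE('a::order)" and f: "f \<in> incidence_algebra"
  shows "inc_mult f inc_one = (f :: 'a \<Rightarrow> 'a \<Rightarrow> 'r::comm_ring_1)"
proof (rule ext)+
  fix x y :: 'a
  have "inc_mult f inc_one x y = (\<Sum>z\<in>{x..y}. if z = y then f x z else 0)"
    unfolding inc_mult_def inc_one_def by (rule sum.cong) auto
  also have "\<dots> = f x y" using f lf_fin[OF lf] unfolding incidence_algebra_def by simp
  finally show "inc_mult f inc_one x y = f x y" .
qed

lemma inc_distr_l: "inc_mult (\<lambda>x y. f x y + g x y) h = (\<lambda>x y. inc_mult f h x y + inc_mult g h x y)"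
  by (simp add: inc_mult_def sum.distrib distrib_right)
lemma inc_distr_r: "inc_mult h (\<lambda>x y. f x y + g x y) = (\<lambda>x y. inc_mult h f x y + inc_mult h g x y)"
  by (simp add: inc_mult_def sum.distrib distrib_left)
lemma inc_diff_l: "inc_mult (\<lambda>x y. f x y - g x y) h = (\<lambda>x y. inc_mult f h x y - inc_mult g h x y)"
  by (simp add: inc_mult_def sum_subtractf left_diff_distrib)


primrec ipow :: "('a::order \<Rightarrow> 'a \<Rightarrow> 'r::comm_ring_1) \<Rightarrow> nat \<Rightarrow> ('a \<Rightarrow> 'a \<Rightarrow> 'r)" where
  "ipow N 0 = inc_one"
| "ipow N (Suc k) = inc_mult N (ipow N k)"

lemma ipow_zero:
  fixes N :: "'a::order \<Rightarrow> 'a \<Rightarrow> 'r::comm_ring_1"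
  assumes lf: "locally_finite_poset TYPE('a)" and N0: "\<And>x. N x x = 0"
  shows "card {x..y} \<le> k \<Longrightarrow> ipow N k x y = 0"
proof (induction k arbitrary: x y)
  case 0
  then have "{x..y} = {}" using lf_fin[OF lf, of x y] by simp
  then have "x \<noteq> y" by auto
  then show ?case by (simp add: inc_one_def)
next
  case (Suc k)
  have "\<And>z. z \<in> {x..y} \<Longrightarrow> N x z * ipow N k z y = 0"
  proof -
    fix z assume z: "z \<in> {x..y}"
    show "N x z * ipow N k z y = 0"
    proof (cases "z = x")
      case True then show ?thesis by (simp add: N0)
    next
      case False
      have "{z..y} \<subset> {x..y}" using z False by (auto intro: order_trans)
      then have "card {z..y} < card {x..y}" using lf_fin[OF lf] by (simp add: psubset_card_mono)
      then have "card {z..y} \<le> k" using Suc.prems by simp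
      then show ?thesis using Suc.IH by simp
    qed
  qed
  then show ?case by (simp add: inc_mult_def)
qed

lemma inc_rinv:
  fixes f :: "'a::order \<Rightarrow> 'a \<Rightarrow> 'r::comm_ring_1"
  assumes lf: "locally_finite_poset TYPE('a)" and f: "f \<in> incidence_algebra" and f1: "\<And>x. f x x = 1"
  shows "\<exists>g\<in>incidence_algebra. (\<forall>x. g x x = 1) \<and> inc_mult f g = inc_one"
proof -
  define N where "N = (\<lambda>x y. inc_one x y - f x y)"
  have N0: "\<And>x. N x x = 0" by (simp add: N_def inc_one_def f1)
  define g where "g = (\<lambda>x y. \<Sum>k<card {x..y}. ipow N k x y)"
  have fin: "\<And>a b::'a. finite {a..b}" using lf_fin[OF lf] .
  have G: "\<And>x y K. card {x..y} \<le> K \<Longrightarrow> g x y = (\<Sum>k<K. ipow N k x y)"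
  proof -
    fix x y K assume K: "card {x..(y::'a)} \<le> K"
    show "g x y = (\<Sum>k<K. ipow N k x y)"
      unfolding g_def
      by (rule sum.mono_neutral_right[symmetric]) (use K ipow_zero[where N=N, OF lf N0] in auto)
  qed
  have gI: "g \<in> incidence_algebra" unfolding incidence_algebra_def g_def by auto
  have g1: "\<forall>x. g x x = 1" by (simp add: g_def inc_one_def)
  have feq: "f = (\<lambda>x y. inc_one x y - N x y)" by (simp add: N_def)
  have "inc_mult f g = inc_one"
  proof (rule ext)+
    fix x y :: 'a
    define K where "K = card {x..y}"
    have "inc_mult N g x y = (\<Sum>z\<in>{x..y}. N x z * (\<Sum>k<K. ipow N k z y))"
      unfolding inc_mult_def
    proof (rule sum.cong[OF refl])
      fix z assume z: "z \<in> {x..y}"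
      have "{z..y} \<subseteq> {x..y}" using z by (auto intro: order_trans)
      then have "card {z..y} \<le> K" unfolding K_def using fin by (simp add: card_mono)
      then show "N x z * g z y = N x z * (\<Sum>k<K. ipow N k z y)" using G by simp
    qed
    also have "\<dots> = (\<Sum>k<K. ipow N (Suc k) x y)"
      by (simp add: sum_distrib_left inc_mult_def sum.swap[of _ "{x..y}"])
    finally have A: "inc_mult N g x y = (\<Sum>k<K. ipow N (Suc k) x y)" .
    have "inc_mult f g x y = g x y - inc_mult N g x y"
      by (simp add: feq inc_diff_l inc_one_left[OF lf gI])
    also have "\<dots> = (\<Sum>k<K. ipow N k x y - ipow N (Suc k) x y)"
      using A G[of x y K] by (simp add: K_def sum_subtractf)
    also have "\<dots> = ipow N 0 x y - ipow N K x y" by (rule sum_lessThan_telescope')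
    also have "\<dots> = inc_one x y" using ipow_zero[where N=N, OF lf N0, of x y K] by (simp add: K_def)
    finally show "inc_mult f g x y = inc_one x y" .
  qed
  then show ?thesis using gI g1 by blast
qed

lemma inc_inv:
  fixes f :: "'a::order \<Rightarrow> 'a \<Rightarrow> 'r::comm_ring_1"
  assumes lf: "locally_finite_poset TYPE('a)" and f: "f \<in> incidence_algebra" and f1: "\<And>x. f x x = 1"
  shows "\<exists>g\<in>incidence_algebra. inc_mult f g = inc_one \<and> inc_mult g f = inc_one"
proof -
  obtain g where g: "g \<in> incidence_algebra" "\<forall>x. g x x = 1" "inc_mult f g = inc_one"
    using inc_rinv[OF lf f f1] by blast
  obtain h where h: "h \<in> incidence_algebra" "inc_mult g h = inc_one"
    using inc_rinv[OF lf g(1)] g(2) by blast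
  have "f = h"
  proof -
    have "f = inc_mult f (inc_mult g h)" using h(2) inc_one_right[OF lf f] by simp
    also have "\<dots> = inc_mult (inc_mult f g) h" by (simp add: inc_assoc[OF lf])
    also have "\<dots> = h" using g(3) inc_one_left[OF lf h(1)] by simp
    finally show ?thesis .
  qed
  then show ?thesis using g h by blast
qed

locale diag_ring = ring R for R (structure) +
  fixes D
  assumes D_closed: "x \<in> carrier R \<Longrightarrow> D x \<in> carrier R"
  and D_mult: "x \<in> carrier R \<Longrightarrow> y \<in> carrier R \<Longrightarrow> D (x \<otimes> y) = D x \<otimes> D y"
  and D_add: "x \<in> carrier R \<Longrightarrow> y \<in> carrier R \<Longrightarrow> D (x \<oplus> y) = D x \<oplus> D y"
  and D_neg: "x \<in> carrier R \<Longrightarrow> D (\<ominus> x) = \<ominus> D x"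
  and D_one: "D \<one> = \<one>"
  and D_idem: "x \<in> carrier R \<Longrightarrow> D (D x) = D x"
  and D_comm: "x \<in> carrier R \<Longrightarrow> y \<in> carrier R \<Longrightarrow> D x \<otimes> D y = D y \<otimes> D x"
  and D_inv: "x \<in> carrier R \<Longrightarrow> D x = \<one> \<Longrightarrow> \<exists>y\<in>carrier R. x \<otimes> y = \<one> \<and> y \<otimes> x = \<one>"
begin

lemma idem_facts:
  assumes e: "e \<in> carrier R" and ee: "e \<otimes> e = e"
  shows "e \<otimes> (\<one> \<ominus> e) = \<zero>" "(\<one> \<ominus> e) \<otimes> e = \<zero>" "(\<one> \<ominus> e) \<otimes> (\<one> \<ominus> e) = \<one> \<ominus> e"
  using e ee by (simp_all add: minus_eq r_distr l_distr r_minus l_minus r_neg a_assoc[symmetric])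

lemma one_split: "e \<in> carrier R \<Longrightarrow> e \<oplus> (\<one> \<ominus> e) = \<one>"
proof -
  assume e: "e \<in> carrier R"
  have "e \<oplus> (\<one> \<oplus> \<ominus> e) = \<one> \<oplus> (e \<oplus> \<ominus> e)" using e by (simp add: a_lcomm)
  then show ?thesis using e by (simp add: minus_eq r_neg)
qed

lemma comm_closure:
  assumes c: "c \<in> carrier R" and x: "x \<in> carrier R" and y: "y \<in> carrier R"
    and cx: "c \<otimes> x = x \<otimes> c" and cy: "c \<otimes> y = y \<otimes> c"
  shows "c \<otimes> (x \<otimes> y) = (x \<otimes> y) \<otimes> c" "c \<otimes> (x \<oplus> y) = (x \<oplus> y) \<otimes> c"
    "c \<otimes> (\<one> \<ominus> x) = (\<one> \<ominus> x) \<otimes> c"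
proof -
  show "c \<otimes> (x \<otimes> y) = (x \<otimes> y) \<otimes> c"
    using c x y cx cy by (metis m_assoc)
  show "c \<otimes> (x \<oplus> y) = (x \<oplus> y) \<otimes> c"
    using c x y cx cy by (simp add: r_distr l_distr)
  show "c \<otimes> (\<one> \<ominus> x) = (\<one> \<ominus> x) \<otimes> c"
    using c x cx by (simp add: minus_eq r_distr l_distr r_minus l_minus)
qed


lemma main:
  fixes n :: nat
  assumes "\<And>i. i \<in> {1..n} \<Longrightarrow> \<alpha> i \<in> carrier R"
    and "\<And>i. i \<in> {1..n} \<Longrightarrow> \<alpha> i \<otimes> \<alpha> i = \<alpha> i"
    and "\<And>i j. i \<in> {1..n} \<Longrightarrow> j \<in> {1..n} \<Longrightarrow> \<alpha> i \<otimes> \<alpha> j = \<alpha> j \<otimes> \<alpha> i"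
  shows "\<exists>b b'. b \<in> carrier R \<and> b' \<in> carrier R \<and> b \<otimes> b' = \<one> \<and> b' \<otimes> b = \<one> \<and>
           (\<forall>i\<in>{1..n}. \<alpha> i = b \<otimes> D (\<alpha> i) \<otimes> b')"
  using assms
proof (induction n)
  case 0
  then show ?case by (intro exI[of _ \<one>]) simp
next
  case (Suc n)
  have sub: "{1..n} \<subseteq> {1..Suc n}" by auto
  have IH: "\<exists>b b'. b \<in> carrier R \<and> b' \<in> carrier R \<and> b \<otimes> b' = \<one> \<and> b' \<otimes> b = \<one> \<and>
           (\<forall>i\<in>{1..n}. \<alpha> i = b \<otimes> D (\<alpha> i) \<otimes> b')"
    by (rule Suc.IH) (use Suc.prems in auto)
  obtain b b' where b: "b \<in> carrier R" "b' \<in> carrier R" "b \<otimes> b' = \<one>" "b' \<otimes> b = \<one>"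
    and bconj: "\<And>i. i\<in>{1..n} \<Longrightarrow> \<alpha> i = b \<otimes> D (\<alpha> i) \<otimes> b'"
    using IH by blast
  define a where "a = \<alpha> (Suc n)"
  have aC: "a \<in> carrier R" and aa: "a \<otimes> a = a" using Suc.prems a_def by auto
  have ac: "\<And>i. i \<in> {1..n} \<Longrightarrow> a \<otimes> \<alpha> i = \<alpha> i \<otimes> a" using Suc.prems(3) sub a_def by auto
  have bb1: "\<And>x. x \<in> carrier R \<Longrightarrow> b \<otimes> (b' \<otimes> x) = x" using b by (simp add: m_assoc[symmetric])
  have bb2: "\<And>x. x \<in> carrier R \<Longrightarrow> b' \<otimes> (b \<otimes> x) = x" using b by (simp add: m_assoc[symmetric])
  have aa2: "\<And>x. x \<in> carrier R \<Longrightarrow> a \<otimes> (a \<otimes> x) = a \<otimes> x" using aC aa by (simp add: m_assoc[symmetric])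
  define g where "g = b' \<otimes> a \<otimes> b"
  have gC: "g \<in> carrier R" using b aC g_def by simp
  define e where "e = D g"
  have eC: "e \<in> carrier R" using gC e_def D_closed by simp
  have gg: "g \<otimes> g = g" using b aC unfolding g_def by (simp add: m_assoc bb1 aa2)
  have ee: "e \<otimes> e = e" unfolding e_def using gg gC by (metis D_mult)
  have eDa: "e = D a"
  proof -
    have "e = D b' \<otimes> D a \<otimes> D b" unfolding e_def g_def using b aC by (simp add: D_mult)
    also have "\<dots> = D a \<otimes> (D b' \<otimes> D b)" using b aC D_closed D_comm[of b' a] by (simp add: m_assoc)
    also have "\<dots> = D a" using b aC D_closed by (simp add: D_mult[symmetric] D_one)
    finally show ?thesis .
  qed
  have F1: "\<And>i. i \<in> {1..n} \<Longrightarrow> b' \<otimes> \<alpha> i \<otimes> b = D (\<alpha> i)"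
  proof -
    fix i assume i: "i \<in> {1..n}"
    have iC: "\<alpha> i \<in> carrier R" using Suc.prems(1) i sub by auto
    have "b' \<otimes> \<alpha> i \<otimes> b = b' \<otimes> (b \<otimes> D (\<alpha> i) \<otimes> b') \<otimes> b" using bconj[OF i] by simp
    also have "\<dots> = D (\<alpha> i)" using b D_closed[OF iC] by (simp add: m_assoc bb2)
    finally show "b' \<otimes> \<alpha> i \<otimes> b = D (\<alpha> i)" .
  qed
  have F3: "\<And>i. i \<in> {1..n} \<Longrightarrow> D (\<alpha> i) \<otimes> g = g \<otimes> D (\<alpha> i)"
  proof -
    fix i assume i: "i \<in> {1..n}"
    have iC: "\<alpha> i \<in> carrier R" using Suc.prems(1) i sub by auto
    have c2: "a \<otimes> (\<alpha> i \<otimes> b) = \<alpha> i \<otimes> (a \<otimes> b)" using ac[OF i] aC iC b by (simp add: m_assoc[symmetric])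
    show "D (\<alpha> i) \<otimes> g = g \<otimes> D (\<alpha> i)" unfolding F1[OF i, symmetric] g_def
      using b aC iC by (simp add: m_assoc bb1 c2)
  qed
  define d where "d = g \<otimes> e \<oplus> (\<one> \<ominus> g) \<otimes> (\<one> \<ominus> e)"
  have dC: "d \<in> carrier R" using gC eC d_def by simp
  have Dd: "D d = \<one>"
  proof -
    have De: "D e = e" unfolding e_def using D_idem gC by simp
    have D1g: "D (\<one> \<ominus> g) = \<one> \<ominus> e" using gC by (simp add: minus_eq D_add D_neg D_one e_def)
    have D1e: "D (\<one> \<ominus> e) = \<one> \<ominus> e" using eC by (simp add: minus_eq D_add D_neg D_one De)
    have "D d = e \<otimes> e \<oplus> (\<one> \<ominus> e) \<otimes> (\<one> \<ominus> e)" unfolding d_def using gC eC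
      by (simp add: D_add D_mult De D1g D1e e_def[symmetric])
    also have "\<dots> = \<one>" using idem_facts[OF eC ee] one_split[OF eC] ee by simp
    finally show ?thesis .
  qed
  obtain d' where d': "d' \<in> carrier R" "d \<otimes> d' = \<one>" "d' \<otimes> d = \<one>" using D_inv[OF dC Dd] by blast
  have gd: "g \<otimes> d = g \<otimes> e"
    unfolding d_def using gC eC idem_facts[OF gC gg]
    by (simp add: r_distr m_assoc[symmetric] gg)
  have de: "d \<otimes> e = g \<otimes> e"
    unfolding d_def using gC eC idem_facts[OF eC ee]
    by (simp add: l_distr m_assoc ee)
  have dcomm: "\<And>i. i \<in> {1..n} \<Longrightarrow> D (\<alpha> i) \<otimes> d = d \<otimes> D (\<alpha> i)"
  proof -
    fix i assume i: "i \<in> {1..n}"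
    have iC: "\<alpha> i \<in> carrier R" using Suc.prems(1) i sub by auto
    have c: "D (\<alpha> i) \<in> carrier R" using D_closed iC by simp
    have cg: "D (\<alpha> i) \<otimes> g = g \<otimes> D (\<alpha> i)" using F3[OF i] .
    have ce: "D (\<alpha> i) \<otimes> e = e \<otimes> D (\<alpha> i)" unfolding e_def using D_comm iC gC by simp
    have c1: "D (\<alpha> i) \<otimes> (g \<otimes> e) = (g \<otimes> e) \<otimes> D (\<alpha> i)" using comm_closure(1)[OF c gC eC cg ce] .
    have c2: "D (\<alpha> i) \<otimes> (\<one> \<ominus> g) = (\<one> \<ominus> g) \<otimes> D (\<alpha> i)" using comm_closure(3)[OF c gC eC cg ce] .
    have c3: "D (\<alpha> i) \<otimes> (\<one> \<ominus> e) = (\<one> \<ominus> e) \<otimes> D (\<alpha> i)" using comm_closure(3)[OF c eC gC ce cg] .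
    have c4: "D (\<alpha> i) \<otimes> ((\<one> \<ominus> g) \<otimes> (\<one> \<ominus> e)) = ((\<one> \<ominus> g) \<otimes> (\<one> \<ominus> e)) \<otimes> D (\<alpha> i)"
      using comm_closure(1)[OF c _ _ c2 c3] gC eC by simp
    show "D (\<alpha> i) \<otimes> d = d \<otimes> D (\<alpha> i)" unfolding d_def
      using comm_closure(2)[OF c _ _ c1 c4] gC eC by simp
  qed
  show ?case
  proof (rule exI[of _ "b \<otimes> d"], rule exI[of _ "d' \<otimes> b'"], intro conjI ballI)
    show "b \<otimes> d \<in> carrier R" using b dC by simp
    show "d' \<otimes> b' \<in> carrier R" using b d' by simp
    show "b \<otimes> d \<otimes> (d' \<otimes> b') = \<one>" using b dC d' by (simp add: m_assoc[symmetric]) (simp add: m_assoc)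
    show "d' \<otimes> b' \<otimes> (b \<otimes> d) = \<one>" using b dC d' by (simp add: m_assoc[symmetric]) (simp add: m_assoc)
    fix i assume i: "i \<in> {1..Suc n}"
    show "\<alpha> i = b \<otimes> d \<otimes> D (\<alpha> i) \<otimes> (d' \<otimes> b')"
    proof (cases "i = Suc n")
      case True
      have "b \<otimes> d \<otimes> D (\<alpha> i) \<otimes> (d' \<otimes> b') = b \<otimes> ((d \<otimes> e) \<otimes> d') \<otimes> b'"
        using True b dC d' eC eDa a_def by (simp add: m_assoc)
      also have "\<dots> = b \<otimes> ((g \<otimes> d) \<otimes> d') \<otimes> b'" using de gd by simp
      also have "\<dots> = b \<otimes> g \<otimes> b'" using gC dC d' by (simp add: m_assoc)
      also have "\<dots> = a" unfolding g_def using b aC by (simp add: m_assoc bb1)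
      finally show ?thesis using True a_def by simp
    next
      case False
      then have i': "i \<in> {1..n}" using i by auto
      have iC: "\<alpha> i \<in> carrier R" using Suc.prems(1) i' sub by auto
      have c: "D (\<alpha> i) \<in> carrier R" using D_closed iC by simp
      have "b \<otimes> d \<otimes> D (\<alpha> i) \<otimes> (d' \<otimes> b') = b \<otimes> (d \<otimes> D (\<alpha> i)) \<otimes> d' \<otimes> b'"
        using b dC d' c by (simp add: m_assoc)
      also have "\<dots> = b \<otimes> (D (\<alpha> i) \<otimes> d) \<otimes> d' \<otimes> b'" using dcomm[OF i'] by simp
      also have "\<dots> = b \<otimes> D (\<alpha> i) \<otimes> b'" using b dC d' c by (simp add: m_assoc)
      also have "\<dots> = \<alpha> i" using bconj[OF i'] by simp
      finally show ?thesis by simp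
    qed
  qed
qed

end

lemma diag_mult: "inc_mult (inc_diag f) (inc_diag g) = (\<lambda>a b. if a = b then f a a * g a a else (0::'r::comm_ring_1))"
proof (rule ext)+
  fix a b :: "'a::order"
  show "inc_mult (inc_diag f) (inc_diag g) a b = (if a = b then f a a * g a a else 0)"
    by (cases "a = b") (auto simp: inc_mult_def inc_diag_def intro!: sum.neutral)
qed

lemma diag_of_mult: "inc_diag (inc_mult f g) = (\<lambda>a b. if a = b then f a a * g a a else (0::'r::comm_ring_1))"
  by (auto simp: inc_mult_def inc_diag_def intro!: ext)

definition IA :: "('a::order \<Rightarrow> 'a \<Rightarrow> 'r::comm_ring_1) ring" where
  "IA = \<lparr>carrier = incidence_algebra, mult = inc_mult, one = inc_one, zero = (\<lambda>x y. 0),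
         add = (\<lambda>f g x y. f x y + g x y)\<rparr>"

lemma IA_ring:
  assumes lf: "locally_finite_poset TYPE('a::order)"
  shows "ring (IA :: ('a \<Rightarrow> 'a \<Rightarrow> 'r::comm_ring_1) ring)"
proof (rule ringI)
  show "abelian_group (IA :: ('a \<Rightarrow> 'a \<Rightarrow> 'r) ring)"
  proof (rule abelian_groupI)
    fix x :: "'a \<Rightarrow> 'a \<Rightarrow> 'r"
    assume x: "x \<in> carrier IA"
    show "\<exists>y\<in>carrier IA. y \<oplus>\<^bsub>IA\<^esub> x = \<zero>\<^bsub>IA\<^esub>"
      by (rule bexI[of _ "\<lambda>a b. - x a b"]) (use x in \<open>auto simp: IA_def incidence_algebra_def\<close>)
  qed (auto simp: IA_def incidence_algebra_def algebra_simps)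
  show "monoid (IA :: ('a \<Rightarrow> 'a \<Rightarrow> 'r) ring)"
    by (rule monoidI) (auto simp: IA_def inc_mult_in inc_one_in inc_assoc[OF lf]
        inc_one_left[OF lf] inc_one_right[OF lf])
qed (auto simp: IA_def inc_distr_l inc_distr_r)

lemma IA_diag:
  assumes lf: "locally_finite_poset TYPE('a::order)"
  shows "diag_ring (IA :: ('a \<Rightarrow> 'a \<Rightarrow> 'r::comm_ring_1) ring) inc_diag"
proof -
  interpret R: ring "IA :: ('a \<Rightarrow> 'a \<Rightarrow> 'r) ring" by (rule IA_ring[OF lf])
  have neg: "\<And>f. f \<in> carrier (IA :: ('a \<Rightarrow> 'a \<Rightarrow> 'r) ring) \<Longrightarrow> \<ominus>\<^bsub>IA\<^esub> f = (\<lambda>a b. - f a b)"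
  proof -
    fix f :: "'a \<Rightarrow> 'a \<Rightarrow> 'r" assume f: "f \<in> carrier IA"
    show "\<ominus>\<^bsub>IA\<^esub> f = (\<lambda>a b. - f a b)"
      by (rule R.minus_equality) (use f in \<open>auto simp: IA_def incidence_algebra_def\<close>)
  qed
  have dI: "\<And>f. inc_diag f \<in> incidence_algebra" by (auto simp: inc_diag_def incidence_algebra_def)
  show ?thesis
  proof (unfold_locales)
    fix x y :: "'a \<Rightarrow> 'a \<Rightarrow> 'r"
    show "inc_diag x \<in> carrier IA" by (simp add: IA_def dI)
    show "inc_diag (x \<otimes>\<^bsub>IA\<^esub> y) = inc_diag x \<otimes>\<^bsub>IA\<^esub> inc_diag y"
      by (simp add: IA_def diag_mult diag_of_mult)
    show "inc_diag (x \<oplus>\<^bsub>IA\<^esub> y) = inc_diag x \<oplus>\<^bsub>IA\<^esub> inc_diag y"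
      by (auto simp: IA_def inc_diag_def intro!: ext)
    show "inc_diag (inc_diag x) = inc_diag x" by (auto simp: inc_diag_def intro!: ext)
    show "inc_diag x \<otimes>\<^bsub>IA\<^esub> inc_diag y = inc_diag y \<otimes>\<^bsub>IA\<^esub> inc_diag x"
      by (auto simp: IA_def diag_mult mult.commute intro!: ext)
  next
    fix x :: "'a \<Rightarrow> 'a \<Rightarrow> 'r" assume x: "x \<in> carrier IA"
    show "inc_diag (\<ominus>\<^bsub>IA\<^esub> x) = \<ominus>\<^bsub>IA\<^esub> inc_diag x"
    proof -
      have x2: "inc_diag x \<in> carrier IA" by (simp add: IA_def dI)
      show ?thesis unfolding neg[OF x] neg[OF x2] by (auto simp: inc_diag_def intro!: ext)
    qed
  next
    show "inc_diag \<one>\<^bsub>IA\<^esub> = \<one>\<^bsub>IA\<^esub>" by (auto simp: IA_def inc_diag_def inc_one_def intro!: ext)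
  next
    fix x :: "'a \<Rightarrow> 'a \<Rightarrow> 'r" assume x: "x \<in> carrier IA" and d: "inc_diag x = \<one>\<^bsub>IA\<^esub>"
    have "\<And>a. x a a = 1"
    proof -
      fix a
      have "inc_diag x a a = inc_one a a" using d by (simp add: IA_def)
      then show "x a a = 1" by (simp add: inc_diag_def inc_one_def)
    qed
    then show "\<exists>y\<in>carrier IA. x \<otimes>\<^bsub>IA\<^esub> y = \<one>\<^bsub>IA\<^esub> \<and> y \<otimes>\<^bsub>IA\<^esub> x = \<one>\<^bsub>IA\<^esub>"
      using inc_inv[OF lf, of x] x by (simp add: IA_def)
  qed
qed

theorem lemma5p4:
  fixes \<alpha> :: "nat \<Rightarrow> ('a::order \<Rightarrow> 'a \<Rightarrow> 'r::comm_ring_1)" and n :: nat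
  assumes lf: "locally_finite_poset TYPE('a)"
    and inI: "\<And>i. i \<in> {1..n} \<Longrightarrow> \<alpha> i \<in> incidence_algebra"
    and idem: "\<And>i. i \<in> {1..n} \<Longrightarrow> inc_mult (\<alpha> i) (\<alpha> i) = \<alpha> i"
    and comm: "\<And>i j. i \<in> {1..n} \<Longrightarrow> j \<in> {1..n} \<Longrightarrow> inc_mult (\<alpha> i) (\<alpha> j) = inc_mult (\<alpha> j) (\<alpha> i)"
  shows "\<exists>\<beta> \<beta>'. \<beta> \<in> incidence_algebra \<and> \<beta>' \<in> incidence_algebra \<and>
           inc_mult \<beta> \<beta>' = inc_one \<and> inc_mult \<beta>' \<beta> = inc_one \<and>
           (\<forall>i\<in>{1..n}. \<alpha> i = inc_mult (inc_mult \<beta> (inc_diag (\<alpha> i))) \<beta>')"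
proof -
  interpret D: diag_ring "IA :: ('a \<Rightarrow> 'a \<Rightarrow> 'r) ring" inc_diag by (rule IA_diag[OF lf])
  have "\<exists>b b'. b \<in> carrier IA \<and> b' \<in> carrier IA \<and> b \<otimes>\<^bsub>IA\<^esub> b' = \<one>\<^bsub>IA\<^esub> \<and> b' \<otimes>\<^bsub>IA\<^esub> b = \<one>\<^bsub>IA\<^esub> \<and>
           (\<forall>i\<in>{1..n}. \<alpha> i = b \<otimes>\<^bsub>IA\<^esub> inc_diag (\<alpha> i) \<otimes>\<^bsub>IA\<^esub> b')"
    by (rule D.main) (use inI idem comm in \<open>auto simp: IA_def\<close>)
  then show ?thesis by (simp add: IA_def)
qed

end
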